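(* If a \textsc{2-Visits} instance has a feasible schedule, then it has a feasible schedule in which all secondary visits are placed in gaps (equivalently, no primary visit is placed in a gap).
   Context: \textsc{2-Visits} (primary/secondary formulation): given non-decreasing positive integers $d_1\le\dots\le d_n$, a feasible schedule is a schedule of length $2n$ (each position $1,\dots,2n$ holds one visit) containing one primary and one secondary visit of each node $i\in[n]$, such that the primary visit of $i$ is at position at most $d_i$, and the secondary visit of $i$ is either before its primary visit or at most $d_i$ positions after its primary visit. The discretized sequence $A=\langle a_1,\dots,a_n\rangle$ is defined by $a_n=d_n$ and $a_i=\min\{a_{i+1}-1,d_i\}$ for $i<n$; a position $p\in[2n]$ is a gap if $p\notin A$. Standing assumptions: all entries of $A$ are positive and all $d_i\le 2n$ (so there are exactly $n$ gaps in $[2n]$). *)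

theory Defs
  imports Main
begin

text \<open>An instance is given by n and deadlines d 1, ..., d n (function d :: nat => nat,
  only values on {1..n} matter).\<close>

definition valid_instance :: "nat \<Rightarrow> (nat \<Rightarrow> nat) \<Rightarrow> bool" where
  "valid_instance n d \<longleftrightarrow>
     (\<forall>i\<in>{1..n}. 0 < d i) \<and> (\<forall>i\<in>{1..n}. \<forall>j\<in>{1..n}. i \<le> j \<longrightarrow> d i \<le> d j)"

definition is_schedule :: "nat \<Rightarrow> (nat \<Rightarrow> nat) \<Rightarrow> (nat \<Rightarrow> nat) \<Rightarrow> bool" where
  "is_schedule n prim sec \<longleftrightarrow>
     (\<forall>i\<in>{1..n}. prim i \<in> {1..2*n} \<and> sec i \<in> {1..2*n}) \<and>
     inj_on prim {1..n} \<and> inj_on sec {1..n} \<and>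
     (\<forall>i\<in>{1..n}. \<forall>j\<in>{1..n}. prim i \<noteq> sec j)"

definition feasible_schedule ::
  "nat \<Rightarrow> (nat \<Rightarrow> nat) \<Rightarrow> (nat \<Rightarrow> nat) \<Rightarrow> (nat \<Rightarrow> nat) \<Rightarrow> bool" where
  "feasible_schedule n d prim sec \<longleftrightarrow>
     is_schedule n prim sec \<and>
     (\<forall>i\<in>{1..n}. prim i \<le> d i \<and>
        (sec i < prim i \<or> (prim i < sec i \<and> sec i \<le> prim i + d i)))"

text \<open>Discretized sequence: a n = d n, a i = min (a (i+1) - 1) (d i) for i < n.
  (Natural subtraction; under the standing assumption that all a i are positive the
  truncation never occurs.)\<close>
function disc :: "nat \<Rightarrow> (nat \<Rightarrow> nat) \<Rightarrow> nat \<Rightarrow> nat" where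
  "disc n d i = (if n \<le> i then d n else min (disc n d (Suc i) - 1) (d i))"
  by auto
termination by (relation "measure (\<lambda>(n, d, i). n - i)") auto

declare disc.simps[simp del]

definition gap :: "nat \<Rightarrow> (nat \<Rightarrow> nat) \<Rightarrow> nat \<Rightarrow> bool" where
  "gap n d p \<longleftrightarrow> p \<in> {1..2*n} \<and> p \<notin> disc n d ` {1..n}"

end

theory Submission
  imports Defs
begin

lemma fill:
  assumes "is_schedule n prim sec" "x \<in> {1..2*n}"
  shows "x \<in> prim ` {1..n} \<or> x \<in> sec ` {1..n}"
proof -
  have r: "prim ` {1..n} \<subseteq> {1..2*n}" "sec ` {1..n} \<subseteq> {1..2*n}"
    using assms(1) unfolding is_schedule_def by auto
  have c1: "card (prim ` {1..n}) = n" "card (sec ` {1..n}) = n"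
    using assms(1) unfolding is_schedule_def by (auto simp: card_image)
  have dis: "prim ` {1..n} \<inter> sec ` {1..n} = {}"
    using assms(1) unfolding is_schedule_def by auto
  have "card (prim ` {1..n} \<union> sec ` {1..n}) = 2*n"
    using c1 dis by (simp add: card_Un_disjoint)
  hence "prim ` {1..n} \<union> sec ` {1..n} = {1..2*n}"
    using r by (intro card_subset_eq) auto
  thus ?thesis using assms(2) by blast
qed

lemma improve:
  assumes feas: "feasible_schedule n d prim sec"
    and bound: "\<forall>i\<in>{1..n}. d i \<le> 2*n"
    and v: "v \<in> {1..n}" and x: "prim v < x" "x \<le> d v" "x \<notin> prim ` {1..n}"
  shows "\<exists>prim' sec'. feasible_schedule n d prim' sec' \<and> sum prim {1..n} < sum prim' {1..n}"
proof -
  have sch: "is_schedule n prim sec" using feas unfolding feasible_schedule_def by auto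
  have "d v \<le> 2*n" using bound v by blast
  hence "x \<in> {1..2*n}" using x by auto
  hence "x \<in> sec ` {1..n}" using fill[OF sch] x(3) by blast
  then obtain w where w: "w \<in> {1..n}" "sec w = x" by (metis imageE)
  define prim' where "prim' = prim(v := x)"
  define sec' where "sec' = sec(w := prim v)"
  have R: "\<forall>i\<in>{1..n}. prim i \<in> {1..2*n} \<and> sec i \<in> {1..2*n}"
    and IP: "inj_on prim {1..n}" and IS: "inj_on sec {1..n}"
    and D: "\<forall>i\<in>{1..n}. \<forall>j\<in>{1..n}. prim i \<noteq> sec j"
    using sch unfolding is_schedule_def by auto
  have C: "\<forall>i\<in>{1..n}. prim i \<le> d i \<and>
        (sec i < prim i \<or> (prim i < sec i \<and> sec i \<le> prim i + d i))"
    using feas unfolding feasible_schedule_def by auto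
  have "is_schedule n prim' sec'"
    unfolding is_schedule_def
  proof (intro conjI)
    show "\<forall>i\<in>{1..n}. prim' i \<in> {1..2*n} \<and> sec' i \<in> {1..2*n}"
      using R \<open>x \<in> {1..2*n}\<close> v unfolding prim'_def sec'_def by auto
    show "inj_on prim' {1..n}"
      unfolding prim'_def inj_on_def
    proof (intro ballI impI)
      fix i j assume ij: "i \<in> {1..n}" "j \<in> {1..n}" "(prim(v := x)) i = (prim(v := x)) j"
      show "i = j"
      proof (cases "i = v"; cases "j = v")
        assume "i \<noteq> v" "j \<noteq> v"
        then show ?thesis using ij IP by (simp add: inj_on_eq_iff)
      next
        assume "i = v" "j \<noteq> v"
        then have "x = prim j" using ij by simp
        then show ?thesis using x(3) ij(2) by blast
      next
        assume "i \<noteq> v" "j = v"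
        then have "x = prim i" using ij by simp
        then show ?thesis using x(3) ij(1) by blast
      qed simp
    qed
    show "inj_on sec' {1..n}"
      unfolding sec'_def inj_on_def
    proof (intro ballI impI)
      fix i j assume ij: "i \<in> {1..n}" "j \<in> {1..n}" "(sec(w := prim v)) i = (sec(w := prim v)) j"
      show "i = j"
      proof (cases "i = w"; cases "j = w")
        assume "i \<noteq> w" "j \<noteq> w"
        then show ?thesis using ij IS by (simp add: inj_on_eq_iff)
      next
        assume "i = w" "j \<noteq> w"
        then have "prim v = sec j" using ij by simp
        then show ?thesis using D v ij(2) by blast
      next
        assume "i \<noteq> w" "j = w"
        then have "prim v = sec i" using ij by simp
        then show ?thesis using D v ij(1) by blast
      qed simp
    qed
    show "\<forall>i\<in>{1..n}. \<forall>j\<in>{1..n}. prim' i \<noteq> sec' j"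
    proof (intro ballI)
      fix i j assume ij: "i \<in> {1..n}" "j \<in> {1..n}"
      show "prim' i \<noteq> sec' j"
      proof (cases "i = v")
        case True
        then show ?thesis
        proof (cases "j = w")
          case True then show ?thesis using \<open>i = v\<close> x unfolding prim'_def sec'_def by auto
        next
          case False
          then have "sec j \<noteq> sec w" using IS ij w unfolding inj_on_def by blast
          then show ?thesis using \<open>i = v\<close> False w unfolding prim'_def sec'_def by auto
        qed
      next
        case False
        then show ?thesis
        proof (cases "j = w")
          case True
          have "prim i \<noteq> prim v" using IP ij v False unfolding inj_on_def by blast
          then show ?thesis using True False unfolding prim'_def sec'_def by auto
        next
          case False
          then show ?thesis using \<open>i \<noteq> v\<close> D ij unfolding prim'_def sec'_def by auto
        qed
      qed
    qed
  qed
  moreover have "\<forall>i\<in>{1..n}. prim' i \<le> d i \<and>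
        (sec' i < prim' i \<or> (prim' i < sec' i \<and> sec' i \<le> prim' i + d i))"
  proof
    fix i assume i: "i \<in> {1..n}"
    show "prim' i \<le> d i \<and> (sec' i < prim' i \<or> (prim' i < sec' i \<and> sec' i \<le> prim' i + d i))"
    proof (cases "i = v")
      case True
      then show ?thesis
      proof (cases "i = w")
        case True then show ?thesis using \<open>i = v\<close> x unfolding prim'_def sec'_def by auto
      next
        case False
        then have "sec i \<noteq> sec w" using IS i w unfolding inj_on_def by blast
        then show ?thesis using \<open>i = v\<close> False w x C[rule_format, OF v] unfolding prim'_def sec'_def
          by (cases "sec v < x") auto
      qed
    next
      case False
      then show ?thesis
      proof (cases "i = w")
        case True
        have "prim i \<noteq> prim v" using IP i v False unfolding inj_on_def by blast
        then show ?thesis using True False C[rule_format, OF w(1)] w x unfolding prim'_def sec'_def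
          by (cases "prim v < prim w") auto
      next
        case False
        then show ?thesis using \<open>i \<noteq> v\<close> C i unfolding prim'_def sec'_def by auto
      qed
    qed
  qed
  ultimately have "feasible_schedule n d prim' sec'" unfolding feasible_schedule_def by auto
  moreover have "sum prim {1..n} < sum prim' {1..n}"
    by (rule sum_strict_mono_ex1) (use v x in \<open>auto simp: prim'_def\<close>)
  ultimately show ?thesis by blast
qed

lemma disc_le: "j \<in> {1..n} \<Longrightarrow> disc n d j \<le> d j"
  by (subst disc.simps) auto

lemma disc_wit:
  assumes apos: "\<forall>i\<in>{1..n}. 0 < disc n d i"
  shows "j \<in> {1..n} \<Longrightarrow> \<exists>l. j \<le> l \<and> l \<le> n \<and> disc n d j + (l - j) = d l"
proof (induction "n - j" arbitrary: j)
  case 0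
  then have "j = n" by auto
  then show ?case by (subst disc.simps) auto
next
  case (Suc k)
  then have jn: "j < n" by auto
  have eq: "disc n d j = min (disc n d (Suc j) - 1) (d j)"
    using jn by (subst disc.simps) auto
  show ?case
  proof (cases "d j \<le> disc n d (Suc j) - 1")
    case True
    then show ?thesis using eq jn by (intro exI[of _ j]) auto
  next
    case False
    have "\<exists>l. Suc j \<le> l \<and> l \<le> n \<and> disc n d (Suc j) + (l - Suc j) = d l"
      using Suc.hyps(1)[of "Suc j"] Suc.hyps(2) Suc.prems jn by auto
    then obtain l where l: "Suc j \<le> l" "l \<le> n" "disc n d (Suc j) + (l - Suc j) = d l"
      by blast
    have "0 < disc n d j" using apos Suc.prems by auto
    hence "disc n d (Suc j) \<ge> 1" using eq False by auto
    then show ?thesis using eq False l by (intro exI[of _ l]) auto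
  qed
qed

theorem lemma5:
  fixes n :: nat and d :: "nat \<Rightarrow> nat"
  assumes inst: "valid_instance n d"
    and bound: "\<forall>i\<in>{1..n}. d i \<le> 2*n"
    and apos: "\<forall>i\<in>{1..n}. 0 < disc n d i"
    and feas: "\<exists>prim sec. feasible_schedule n d prim sec"
  shows "\<exists>prim sec. feasible_schedule n d prim sec \<and> (\<forall>i\<in>{1..n}. gap n d (sec i))"
proof -
  obtain p0 s0 where f0: "feasible_schedule n d p0 s0" using feas by auto
  have "\<exists>z. (\<lambda>(p, s). feasible_schedule n d p s) z \<and>
     (\<forall>y. (\<lambda>(p, s). feasible_schedule n d p s) y \<longrightarrow>
        (\<lambda>(p, s). sum p {1..n}) y \<le> (\<lambda>(p, s). sum p {1..n}) z)"
  proof (rule ex_has_greatest_nat[where k = "(p0, s0)" and b = "2*n*n + 1"])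
    show "(\<lambda>(p, s). feasible_schedule n d p s) (p0, s0)" using f0 by simp
    show "\<forall>y. (\<lambda>(p, s). feasible_schedule n d p s) y \<longrightarrow> (\<lambda>(p, s). sum p {1..n}) y < 2*n*n + 1"
    proof (intro allI impI)
      fix y :: "(nat \<Rightarrow> nat) \<times> (nat \<Rightarrow> nat)"
      assume "(\<lambda>(p, s). feasible_schedule n d p s) y"
      then obtain p s where y: "y = (p, s)" "feasible_schedule n d p s" by auto
      have "\<forall>i\<in>{1..n}. p i \<le> 2*n"
        using y(2) unfolding feasible_schedule_def is_schedule_def by auto
      hence "sum p {1..n} \<le> sum (\<lambda>_. 2*n) {1..n}" by (intro sum_mono) auto
      hence "sum p {1..n} \<le> 2*n*n" by simp
      thus "(\<lambda>(p, s). sum p {1..n}) y < 2*n*n + 1" using y by simp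
    qed
  qed
  then obtain prim sec where fs: "feasible_schedule n d prim sec"
    and mx: "\<And>p s. feasible_schedule n d p s \<Longrightarrow> sum p {1..n} \<le> sum prim {1..n}"
    by fastforce
  have F: "x \<in> prim ` {1..n}" if vx: "v \<in> {1..n}" "prim v < x" "x \<le> d v" for v x
  proof (rule ccontr)
    assume nx: "x \<notin> prim ` {1..n}"
    obtain p' s' where "feasible_schedule n d p' s'" "sum prim {1..n} < sum p' {1..n}"
      using improve[OF fs bound vx nx] by blast
    then show False using mx by fastforce
  qed
  have sch: "is_schedule n prim sec" using fs unfolding feasible_schedule_def by auto
  have IP: "inj_on prim {1..n}" using sch unfolding is_schedule_def by auto
  have C: "\<forall>i\<in>{1..n}. prim i \<le> d i" using fs unfolding feasible_schedule_def by auto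
  have mono: "\<And>i j. i \<in> {1..n} \<Longrightarrow> j \<in> {1..n} \<Longrightarrow> i \<le> j \<Longrightarrow> d i \<le> d j"
    using inst unfolding valid_instance_def by auto
  have A: "disc n d j \<in> prim ` {1..n}" if j: "j \<in> {1..n}" for j
  proof (rule ccontr)
    assume na: "disc n d j \<notin> prim ` {1..n}"
    define a where "a = disc n d j"
    obtain l where l: "j \<le> l" "l \<le> n" "a + (l - j) = d l"
      using disc_wit[OF apos j] unfolding a_def by auto
    have "prim ` {j..l} \<subseteq> {a+1..d l}"
    proof
      fix y assume "y \<in> prim ` {j..l}"
      then obtain v where v: "v \<in> {j..l}" "y = prim v" by auto
      have v1: "v \<in> {1..n}" using v j l by auto
      have "prim v \<noteq> a" using na v1 a_def by (metis imageI)
      moreover have "\<not> prim v < a"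
      proof
        assume "prim v < a"
        moreover have "a \<le> d v" using disc_le[of j n d, OF j] mono[OF j v1] v unfolding a_def by auto
        ultimately show False using F[OF v1] na a_def by auto
      qed
      moreover have "prim v \<le> d l"
      proof -
        have "l \<in> {1..n}" using l j by auto
        hence "d v \<le> d l" using mono[OF v1, of l] v by auto
        moreover have "prim v \<le> d v" using C v1 by blast
        ultimately show ?thesis by linarith
      qed
      ultimately show "y \<in> {a+1..d l}" using v by auto
    qed
    hence "card (prim ` {j..l}) \<le> card {a+1..d l}" by (intro card_mono) auto
    moreover have "card (prim ` {j..l}) = l + 1 - j"
    proof -
      have "inj_on prim {j..l}" using inj_on_subset[OF IP, of "{j..l}"] j l by auto
      thus ?thesis by (simp add: card_image)
    qed
    ultimately show False using l by auto
  qed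
  have "\<forall>i\<in>{1..n}. gap n d (sec i)"
  proof
    fix i assume i: "i \<in> {1..n}"
    have "sec i \<in> {1..2*n}" using sch i unfolding is_schedule_def by auto
    moreover have "sec i \<notin> disc n d ` {1..n}"
    proof
      assume "sec i \<in> disc n d ` {1..n}"
      then obtain j where "j \<in> {1..n}" "sec i = disc n d j" by auto
      then obtain v where "v \<in> {1..n}" "prim v = sec i" using A by force
      then show False using sch i unfolding is_schedule_def by auto
    qed
    ultimately show "gap n d (sec i)" unfolding gap_def by auto
  qed
  then show ?thesis using fs by blast
qed

end
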